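(* Let $p\in(0,1)$ and let $\Phi,\phi$ be the standard normal c.d.f. and p.d.f. For $k\in\mathbb{N}$ let $h_k^{(1)}(\infty)$ be the unique real solution $h$ of $\int_{-\infty}^{\infty}\Phi^k(t+h)\phi(t)\,dt=p$ and let $h_k^{(2)}(\infty)$ be the unique real solution $h$ of $\Big[\int_{-\infty}^{\infty}\Phi(t+h)\phi(t)\,dt\Big]^k=p$. Then, as $k\to\infty$, $h_k^{(2)}(\infty)\sim\sqrt2\,h_k^{(1)}(\infty)\sim2\sqrt{\ln(k)}$.
   Context: $a_k\sim b_k$ means $a_k/b_k\to1$ as $k\to\infty$. These are the analogues, for Student's $t$ with $\nu=\infty$ degrees of freedom (i.e. the standard normal), of the constants of Dudewicz–Dalal's and Rinott's two-stage selection procedures. *)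

theory Defs
  imports "HOL-Probability.Probability" "HOL-Library.Landau_Symbols"
begin

definition phi :: "real \<Rightarrow> real" where
  "phi = std_normal_density"

definition Phi :: "real \<Rightarrow> real" where
  "Phi x = (LBINT t:{..x}. phi t)"

definition h1 :: "real \<Rightarrow> nat \<Rightarrow> real" where
  "h1 p k = (THE h. (LINT t|lborel. (Phi (t + h)) ^ k * phi t) = p)"

definition h2 :: "real \<Rightarrow> nat \<Rightarrow> real" where
  "h2 p k = (THE h. (LINT t|lborel. Phi (t + h) * phi t) ^ k = p)"

end

theory Submission
  imports Defs
begin


lemma phi_eq: "phi t = exp (- t\<^sup>2 / 2) / sqrt (2 * pi)"
  unfolding phi_def std_normal_density_def by simp

lemma phi_pos: "0 < phi t"
  unfolding phi_def by (simp add: normal_density_pos)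

lemma phi_le1: "phi t \<le> 1"
proof -
  have "exp (- t\<^sup>2 / 2) \<le> 1" by simp
  moreover have "1 \<le> sqrt (2 * pi)" using pi_gt3 by simp
  ultimately have "exp (- t\<^sup>2 / 2) \<le> sqrt (2 * pi)" by linarith
  then show ?thesis unfolding phi_eq by (simp add: divide_le_eq)
qed

lemma phi_mono: "\<bar>s\<bar> \<le> \<bar>t\<bar> \<Longrightarrow> phi t \<le> phi s"
  unfolding phi_eq
  by (intro divide_right_mono) (auto simp: abs_le_square_iff)

lemma phi_meas[measurable]: "phi \<in> borel_measurable borel"
  unfolding phi_def by simp

lemma phi_int[simp, intro]: "integrable lborel phi"
  unfolding phi_def by simp

lemma phi_integral: "(LINT t|lborel. phi t) = 1"
  unfolding phi_def by simp

lemma int_bdd: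
  assumes "g \<in> borel_measurable lborel" "\<And>t. \<bar>g t\<bar> \<le> B"
  shows "integrable lborel (\<lambda>t. g t * phi t)"
proof (rule Bochner_Integration.integrable_bound[of lborel "\<lambda>t. B * phi t"])
  show "integrable lborel (\<lambda>t. B * phi t)" by simp
  show "(\<lambda>t. g t * phi t) \<in> borel_measurable lborel" using assms(1) by measurable
  show "AE x in lborel. norm (g x * phi x) \<le> norm (B * phi x)"
    using assms(2) phi_pos
    by (auto simp: abs_mult intro!: AE_I2 mult_right_mono order.trans[OF _ abs_ge_self] less_imp_le[OF phi_pos])
qed

lemma int_ind: "integrable lborel (\<lambda>t. indicator A t * phi t)" if "A \<in> sets borel"
  by (rule int_bdd) (use that in auto)

lemma Phi_eq: "Phi x = (LINT t|lborel. indicator {..x} t * phi t)"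
  unfolding Phi_def set_lebesgue_integral_def by simp

lemma int_ind_split:
  assumes "A \<in> sets borel" "B \<in> sets borel" "A \<inter> B = {}"
  shows "(LINT t|lborel. indicator (A \<union> B) t * phi t) =
     (LINT t|lborel. indicator A t * phi t) + (LINT t|lborel. indicator B t * phi t)"
proof -
  have "(\<lambda>t. indicator (A \<union> B) t * phi t) = (\<lambda>t. indicator A t * phi t + indicator B t * phi t)"
    using assms(3) by (auto simp: indicator_def fun_eq_iff)
  then show ?thesis using int_ind assms by simp
qed

lemma one_minus_Phi: "1 - Phi x = (LINT t|lborel. indicator {x<..} t * phi t)"
proof -
  have "{..x} \<union> {x<..} = UNIV" by auto
  then have "(LINT t|lborel. indicator ({..x} \<union> {x<..}) t * phi t) = 1"
    by (simp add: phi_integral)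
  moreover have "{..x} \<inter> {x<..} = {}" by auto
  ultimately show ?thesis using int_ind_split[of "{..x}" "{x<..}"] Phi_eq[of x] by auto
qed

lemma Phi_diff: "a \<le> b \<Longrightarrow> Phi b - Phi a = (LINT t|lborel. indicator {a<..b} t * phi t)"
proof -
  assume "a \<le> b"
  then have "{..a} \<union> {a<..b} = {..b}" by auto
  moreover have "{..a} \<inter> {a<..b} = {}" by auto
  ultimately show ?thesis using int_ind_split[of "{..a}" "{a<..b}"] Phi_eq[of a] Phi_eq[of b] by auto
qed

lemma int_ind_const: "(a::real) \<le> b \<Longrightarrow> (LINT t|lborel. indicator {a<..b} t * c) = (b - a) * (c::real)"
proof -
  assume "a \<le> b"
  have "measure lborel {a<..b} = b - a"
    using \<open>a \<le> b\<close> by (simp add: measure_def del: measure_lborel_Ioc)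
  then show ?thesis by (simp add: integral_mult_left_zero del: measure_lborel_Ioc)
qed

lemma int_ind_c: "(a::real) \<le> b \<Longrightarrow> integrable lborel (\<lambda>t. indicator {a<..b} t * (c::real))"
  using emeasure_lborel_Ioc[of a b]
  by (intro integrable_mult_left) (auto simp: integrable_indicator_iff ennreal_less_top)

lemma Phi_diff_le: assumes "a \<le> b" shows "Phi b - Phi a \<le> b - a"
proof -
  have "Phi b - Phi a \<le> (LINT t|lborel. indicator {a<..b} t * 1)"
    unfolding Phi_diff[OF assms]
    by (intro integral_mono int_ind int_ind_c assms) (auto simp: indicator_def phi_le1)
  then show ?thesis using int_ind_const[OF assms, of 1] unfolding mult_1_right by linarith
qed

lemma Phi_diff_ge: assumes "a \<le> b" "\<And>t. a < t \<Longrightarrow> t \<le> b \<Longrightarrow> m \<le> phi t"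
  shows "(b - a) * m \<le> Phi b - Phi a"
proof -
  have "(LINT t|lborel. indicator {a<..b} t * m) \<le> Phi b - Phi a"
    unfolding Phi_diff[OF assms(1)]
    by (intro integral_mono int_ind int_ind_c assms) (auto simp: indicator_def assms(2))
  then show ?thesis using int_ind_const[OF assms(1), of m] by linarith
qed

lemma Phi_mono: "a \<le> b \<Longrightarrow> Phi a \<le> Phi b"
  using Phi_diff_ge[of a b 0] phi_pos by (fastforce intro: less_imp_le)

lemma Phi_nonneg: "0 \<le> Phi x"
  unfolding Phi_eq by (intro integral_nonneg_AE) (auto intro!: AE_I2 mult_nonneg_nonneg less_imp_le[OF phi_pos])

lemma Phi_le1: "Phi x \<le> 1"
proof -
  have "0 \<le> 1 - Phi x"
    unfolding one_minus_Phi by (intro integral_nonneg_AE) (auto intro!: AE_I2 mult_nonneg_nonneg less_imp_le[OF phi_pos])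
  then show ?thesis by simp
qed

lemma Phi_lip: "\<bar>Phi a - Phi b\<bar> \<le> \<bar>a - b\<bar>"
  using Phi_diff_le[of a b] Phi_diff_le[of b a] Phi_mono[of a b] Phi_mono[of b a]
  by (cases "a \<le> b") auto

lemma Phi_cont: "continuous_on UNIV Phi"
  by (rule lipschitz_on_continuous_on[of 1]) (auto intro!: lipschitz_onI simp: dist_real_def Phi_lip)

lemma Phi_meas[measurable]: "Phi \<in> borel_measurable borel"
  by (rule borel_measurable_continuous_onI[OF Phi_cont])

lemma nd1: "normal_density m 1 t = exp (- (t - m)\<^sup>2 / 2) / sqrt (2 * pi)"
  unfolding normal_density_def by simp

lemma gauss_shift:
  assumes "0 \<le> x * y"
  shows "phi (x + y) \<le> exp (- x\<^sup>2 / 2) * normal_density x 1 (x + y)"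
proof -
  have "exp (- (x + y)\<^sup>2 / 2) \<le> exp (- x\<^sup>2 / 2 + - y\<^sup>2 / 2)"
    using assms by (simp add: power2_eq_square algebra_simps) (simp add: field_simps)
  then have "exp (- (x + y)\<^sup>2 / 2) \<le> exp (- x\<^sup>2 / 2) * exp (- y\<^sup>2 / 2)"
    by (metis exp_add)
  then show ?thesis unfolding phi_eq nd1 by (simp add: divide_right_mono)
qed

lemma tail_up: assumes "0 \<le> x" shows "1 - Phi x \<le> exp (- x\<^sup>2 / 2)"
proof -
  have "1 - Phi x \<le> (LINT t|lborel. exp (- x\<^sup>2 / 2) * normal_density x 1 t)"
    unfolding one_minus_Phi
  proof (intro integral_mono int_ind)
    fix t
    show "indicator {x<..} t * phi t \<le> exp (- x\<^sup>2 / 2) * normal_density x 1 t"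
    proof (cases "x < t")
      case True
      then have "phi (x + (t - x)) \<le> exp (- x\<^sup>2 / 2) * normal_density x 1 (x + (t - x))"
        using assms by (intro gauss_shift) simp
      then show ?thesis using True by simp
    qed simp
  qed auto
  then show ?thesis by simp
qed

lemma tail_low: assumes "0 \<le> x" shows "Phi (- x) \<le> exp (- x\<^sup>2 / 2)"
proof -
  have "Phi (-x) \<le> (LINT t|lborel. exp (- (-x)\<^sup>2 / 2) * normal_density (-x) 1 t)"
    unfolding Phi_eq
  proof (intro integral_mono int_ind)
    fix t
    show "indicator {..-x} t * phi t \<le> exp (- (-x)\<^sup>2 / 2) * normal_density (-x) 1 t"
    proof (cases "t \<le> -x")
      case True
      then have "phi (-x + (t + x)) \<le> exp (- (-x)\<^sup>2 / 2) * normal_density (-x) 1 (-x + (t + x))"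
        using assms by (intro gauss_shift) (simp add: mult_nonneg_nonpos)
      then show ?thesis using True by simp
    qed simp
  qed auto
  then show ?thesis by simp
qed

lemma tail_lb: assumes "0 \<le> x" shows "phi (x + 1) \<le> 1 - Phi x"
proof -
  have "(x + 1 - x) * phi (x + 1) \<le> Phi (x + 1) - Phi x"
    using assms by (intro Phi_diff_ge phi_mono) auto
  then show ?thesis using Phi_le1[of "x+1"] by simp
qed



definition F :: "nat \<Rightarrow> real \<Rightarrow> real" where
  "F k h = (LINT t|lborel. Phi (t + h) ^ k * phi t)"

lemma F_int: "integrable lborel (\<lambda>t. Phi (t + h) ^ k * phi t)"
  by (rule int_bdd[where B=1]) (auto simp: Phi_nonneg Phi_le1 power_le_one)

lemma pow_diff:
  fixes x y :: real
  assumes "0 \<le> x" "x \<le> 1" "0 \<le> y" "y \<le> 1"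
  shows "\<bar>x ^ k - y ^ k\<bar> \<le> real k * \<bar>x - y\<bar>"
proof (induction k)
  case (Suc k)
  have "x ^ Suc k - y ^ Suc k = x * (x ^ k - y ^ k) + (x - y) * y ^ k"
    by (simp add: algebra_simps)
  then have 1: "\<bar>x ^ Suc k - y ^ Suc k\<bar> \<le> \<bar>x * (x ^ k - y ^ k)\<bar> + \<bar>(x - y) * y ^ k\<bar>"
    by (simp add: abs_triangle_ineq)
  have 2: "\<bar>x * (x ^ k - y ^ k)\<bar> \<le> \<bar>x ^ k - y ^ k\<bar>"
    using assms by (simp add: abs_mult mult_left_le_one_le)
  have 3: "\<bar>(x - y) * y ^ k\<bar> \<le> \<bar>x - y\<bar>"
    using assms by (simp add: abs_mult mult_right_le_one_le power_le_one)
  from 1 2 3 have "\<bar>x ^ Suc k - y ^ Suc k\<bar> \<le> \<bar>x ^ k - y ^ k\<bar> + \<bar>x - y\<bar>" by linarith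
  moreover have "real (Suc k) * \<bar>x - y\<bar> = \<bar>x - y\<bar> + real k * \<bar>x - y\<bar>" by (simp add: algebra_simps)
  ultimately show ?case using Suc.IH by linarith
qed simp

lemma F_lip: "\<bar>F k a - F k b\<bar> \<le> real k * \<bar>a - b\<bar>"
proof -
  have eq: "F k a - F k b = (LINT t|lborel. (Phi (t + a) ^ k - Phi (t + b) ^ k) * phi t)"
    unfolding F_def using F_int by (simp add: left_diff_distrib)
  have int2: "integrable lborel (\<lambda>t. (Phi (t + a) ^ k - Phi (t + b) ^ k) * phi t)"
    using F_int[of a k] F_int[of b k] by (simp add: left_diff_distrib)
  have pw: "\<bar>Phi (t + a) ^ k - Phi (t + b) ^ k\<bar> \<le> real k * \<bar>a - b\<bar>" for t
    using pow_diff[of "Phi (t+a)" "Phi (t+b)" k] Phi_lip[of "t+a" "t+b"]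
      Phi_nonneg Phi_le1
    by (smt (verit, best) mult_left_mono of_nat_0_le_iff)
  have "F k a - F k b \<le> (LINT t|lborel. (real k * \<bar>a - b\<bar>) * phi t)"
    unfolding eq
  proof (intro integral_mono int2)
    fix t show "(Phi (t + a) ^ k - Phi (t + b) ^ k) * phi t \<le> real k * \<bar>a - b\<bar> * phi t"
      using pw[of t] phi_pos[of t] by (intro mult_right_mono) auto
  qed auto
  moreover have "(LINT t|lborel. -(real k * \<bar>a - b\<bar>) * phi t) \<le> F k a - F k b"
    unfolding eq
  proof (intro integral_mono int2)
    fix t show "- (real k * \<bar>a - b\<bar>) * phi t \<le> (Phi (t + a) ^ k - Phi (t + b) ^ k) * phi t"
      using pw[of t] phi_pos[of t] by (intro mult_right_mono) auto
  qed auto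
  ultimately show ?thesis by (simp add: phi_integral abs_le_iff)
qed

lemma F_cont: "continuous_on UNIV (F k)"
  by (rule lipschitz_on_continuous_on[of "real k"]) (auto intro!: lipschitz_onI simp: dist_real_def F_lip)

lemma Phi_pos: "0 < Phi a"
proof -
  have "(a - (a - 1)) * phi (\<bar>a\<bar> + 1) \<le> Phi a - Phi (a - 1)"
    by (intro Phi_diff_ge phi_mono) auto
  then show ?thesis using phi_pos[of "\<bar>a\<bar>+1"] Phi_nonneg[of "a-1"] by simp
qed

lemma pow_diff_ge:
  fixes x y :: real
  assumes "0 \<le> y" "y \<le> x" "1 \<le> k"
  shows "(x - y) * x ^ (k - 1) \<le> x ^ k - y ^ k"
proof -
  have "y ^ k = y * y ^ (k - 1)" using assms(3) by (simp add: power_eq_if)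
  also have "\<dots> \<le> y * x ^ (k - 1)" using assms by (intro mult_left_mono power_mono) auto
  finally have "y ^ k \<le> y * x ^ (k - 1)" .
  moreover have "x ^ k = x * x ^ (k - 1)" using assms(3) by (simp add: power_eq_if)
  ultimately show ?thesis by (simp add: algebra_simps)
qed

lemma F_strict:
  assumes "1 \<le> k" "a < b"
  shows "F k a < F k b"
proof -
  define M where "M = \<bar>a\<bar> + \<bar>b\<bar> + 1"
  define c where "c = (b - a) * phi M * Phi a ^ (k - 1) * phi 1"
  have cpos: "0 < c" unfolding c_def using assms phi_pos Phi_pos by simp
  have int2: "integrable lborel (\<lambda>t. (Phi (t + b) ^ k - Phi (t + a) ^ k) * phi t)"
    using F_int[of a k] F_int[of b k] by (simp add: left_diff_distrib)
  have eq: "F k b - F k a = (LINT t|lborel. (Phi (t + b) ^ k - Phi (t + a) ^ k) * phi t)"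
    unfolding F_def using F_int by (simp add: left_diff_distrib)
  have "(LINT t|lborel. indicator {0<..(1::real)} t * c) \<le> F k b - F k a"
    unfolding eq
  proof (rule integral_mono[OF int_ind_c int2])
    fix t
    show "indicator {0<..1} t * c \<le> (Phi (t + b) ^ k - Phi (t + a) ^ k) * phi t"
    proof (cases "0 < t \<and> t \<le> 1")
      case True
      have d: "(t + b - (t + a)) * phi M \<le> Phi (t + b) - Phi (t + a)"
        using assms True by (intro Phi_diff_ge phi_mono) (auto simp: M_def)
      have p1: "Phi a ^ (k - 1) \<le> Phi (t + b) ^ (k - 1)"
        using True assms by (intro power_mono Phi_mono Phi_nonneg) auto
      have p2: "(Phi (t + b) - Phi (t + a)) * Phi (t + b) ^ (k - 1) \<le> Phi (t + b) ^ k - Phi (t + a) ^ k"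
        using assms by (intro pow_diff_ge Phi_nonneg Phi_mono) auto
      have p3: "phi 1 \<le> phi t" using True by (intro phi_mono) auto
      have "(b - a) * phi M * Phi a ^ (k - 1) \<le> (Phi (t + b) - Phi (t + a)) * Phi (t + b) ^ (k - 1)"
        using d p1 assms phi_pos[of M] Phi_pos[of a] Phi_mono[of "t+a" "t+b"]
        by (intro mult_mono) (auto intro: mult_nonneg_nonneg)
      also have "\<dots> \<le> Phi (t + b) ^ k - Phi (t + a) ^ k" by (rule p2)
      finally have "c \<le> (Phi (t + b) ^ k - Phi (t + a) ^ k) * phi t"
        unfolding c_def using p3 phi_pos[of 1] assms phi_pos[of M] Phi_pos[of a]
          power_mono[OF Phi_mono[of "t+a" "t+b"] Phi_nonneg, of k]
        by (intro mult_mono) auto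
      then show ?thesis using True by simp
    next
      case False
      have "Phi (t + a) ^ k \<le> Phi (t + b) ^ k"
        using assms by (intro power_mono Phi_mono Phi_nonneg) auto
      then have "0 \<le> (Phi (t + b) ^ k - Phi (t + a) ^ k) * phi t"
        using phi_pos[of t] by simp
      then show ?thesis using False by (auto simp: indicator_def)
    qed
  qed auto
  then show ?thesis using int_ind_const[of 0 1 c] cpos by simp
qed

lemma F_lower: "Phi (h - s) ^ k * (1 - Phi (- s)) \<le> F k h"
proof -
  have "(LINT t|lborel. Phi (h - s) ^ k * (indicator {-s<..} t * phi t)) \<le> F k h"
    unfolding F_def
  proof (intro integral_mono F_int integrable_mult_right int_ind)
    fix t show "Phi (h - s) ^ k * (indicator {- s<..} t * phi t) \<le> Phi (t + h) ^ k * phi t"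
    proof (cases "-s < t")
      case True
      then have "Phi (h - s) ^ k \<le> Phi (t + h) ^ k" by (intro power_mono Phi_mono Phi_nonneg) auto
      then show ?thesis using True phi_pos[of t] by (simp add: mult_right_mono)
    qed (use phi_pos[of t] Phi_nonneg in simp)
  qed auto
  then show ?thesis by (simp add: one_minus_Phi)
qed

lemma F_upper: "F k h \<le> Phi (h + s) ^ k + (1 - Phi s)"
proof -
  have "F k h \<le> (LINT t|lborel. Phi (h + s) ^ k * phi t + indicator {s<..} t * phi t)"
    unfolding F_def
  proof (intro integral_mono F_int Bochner_Integration.integrable_add integrable_mult_right int_ind phi_int)
    fix t show "Phi (t + h) ^ k * phi t \<le> Phi (h + s) ^ k * phi t + indicator {s<..} t * phi t"
    proof (cases "t \<le> s")
      case True
      then have "Phi (t + h) ^ k \<le> Phi (h + s) ^ k" by (intro power_mono Phi_mono Phi_nonneg) auto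
      then show ?thesis using True phi_pos[of t] by (simp add: mult_right_mono)
    next
      case False
      have "Phi (t + h) ^ k \<le> 1" by (simp add: Phi_nonneg Phi_le1 power_le_one)
      then have "Phi (t + h) ^ k * phi t \<le> phi t" using phi_pos[of t] by (simp add: mult_left_le_one_le)
      moreover have "0 \<le> Phi (h + s) ^ k * phi t" using phi_pos[of t] Phi_nonneg[of "h+s"] by simp
      ultimately show ?thesis using False by simp
    qed
  qed auto
  also have "\<dots> = Phi (h + s) ^ k + (1 - Phi s)"
    using int_ind[of "{s<..}"] by (simp add: one_minus_Phi phi_integral)
  finally show ?thesis .
qed



lemma nd_half: "normal_density m (1 / sqrt 2) t = exp (- (t - m)\<^sup>2) / sqrt pi"
  unfolding normal_density_def by (simp add: power_divide)

lemma gauss_prod: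
  "exp (- (t + h)\<^sup>2 / 2) * phi t = exp (- h\<^sup>2 / 4) / sqrt 2 * normal_density (- h / 2) (1 / sqrt 2) t"
proof -
  have e: "- (t + h)\<^sup>2 / 2 + - t\<^sup>2 / 2 = - h\<^sup>2 / 4 + - (t - - h / 2)\<^sup>2"
    by (simp add: power2_eq_square field_simps)
  have "exp (- (t + h)\<^sup>2 / 2) * exp (- t\<^sup>2 / 2) = exp (- h\<^sup>2 / 4) * exp (- (t - - h / 2)\<^sup>2)"
    using e by (metis exp_add)
  moreover have "sqrt (2 * pi) = sqrt 2 * sqrt pi" by (simp add: real_sqrt_mult)
  ultimately show ?thesis unfolding phi_eq nd_half by (simp add: field_simps)
qed

lemma one_minus_F1: "1 - F 1 h = (LINT t|lborel. (1 - Phi (t + h)) * phi t)"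
  unfolding F_def using F_int[of h 1]
  by (simp add: left_diff_distrib phi_integral)

lemma G_up: assumes "0 \<le> h" shows "1 - F 1 h \<le> 2 * exp (- h\<^sup>2 / 4)"
proof -
  have "1 - F 1 h \<le> (LINT t|lborel. exp (- h\<^sup>2 / 4) / sqrt 2 * normal_density (- h / 2) (1 / sqrt 2) t
           + exp (- (-h)\<^sup>2 / 2) * normal_density (-h) 1 t)"
    unfolding one_minus_F1
  proof (rule integral_mono)
    show "integrable lborel (\<lambda>t. (1 - Phi (t + h)) * phi t)"
      by (rule int_bdd[where B=1]) (auto simp: Phi_nonneg Phi_le1)
  next
    fix t
    show "(1 - Phi (t + h)) * phi t \<le> exp (- h\<^sup>2 / 4) / sqrt 2 * normal_density (- h / 2) (1 / sqrt 2) t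
           + exp (- (-h)\<^sup>2 / 2) * normal_density (-h) 1 t"
    proof (cases "0 \<le> t + h")
      case True
      have "(1 - Phi (t + h)) * phi t \<le> exp (- (t + h)\<^sup>2 / 2) * phi t"
        using tail_up[OF True] phi_pos[of t] by (intro mult_right_mono) auto
      also have "\<dots> = exp (- h\<^sup>2 / 4) / sqrt 2 * normal_density (- h / 2) (1 / sqrt 2) t"
        by (rule gauss_prod)
      finally show ?thesis by (smt (verit) exp_gt_zero mult_nonneg_nonneg normal_density_nonneg)
    next
      case False
      have "phi (-h + (t + h)) \<le> exp (- (-h)\<^sup>2 / 2) * normal_density (-h) 1 (-h + (t + h))"
        using assms False by (intro gauss_shift) (simp add: mult_nonneg_nonpos)
      then have "phi t \<le> exp (- (-h)\<^sup>2 / 2) * normal_density (-h) 1 t" by simp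
      moreover have "(1 - Phi (t + h)) * phi t \<le> phi t"
        using Phi_nonneg[of "t+h"] phi_pos[of t] by (simp add: mult_left_le_one_le)
      moreover have "0 \<le> exp (- h\<^sup>2 / 4) / sqrt 2 * normal_density (- h / 2) (1 / sqrt 2) t" by simp
      ultimately show ?thesis by linarith
    qed
  qed auto
  also have "\<dots> = exp (- h\<^sup>2 / 4) / sqrt 2 + exp (- h\<^sup>2 / 2)" by simp
  also have "\<dots> \<le> exp (- h\<^sup>2 / 4) + exp (- h\<^sup>2 / 4)"
  proof (intro add_mono)
    show "exp (- h\<^sup>2 / 4) / sqrt 2 \<le> exp (- h\<^sup>2 / 4)" by (simp add: divide_le_eq)
    show "exp (- h\<^sup>2 / 2) \<le> exp (- h\<^sup>2 / 4)" by simp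
  qed
  finally show ?thesis by simp
qed

lemma G_low: assumes "0 \<le> h" shows "phi (h / 2 + 1) ^ 2 \<le> 1 - F 1 h"
proof -
  have "(LINT t|lborel. indicator {-h/2-1<..-h/2} t * phi (h / 2 + 1) ^ 2) \<le> 1 - F 1 h"
    unfolding one_minus_F1
  proof (rule integral_mono[OF int_ind_c])
    show "integrable lborel (\<lambda>t. (1 - Phi (t + h)) * phi t)"
      by (rule int_bdd[where B=1]) (auto simp: Phi_nonneg Phi_le1)
  next
    fix t
    show "indicator {-h/2-1<..-h/2} t * phi (h / 2 + 1) ^ 2 \<le> (1 - Phi (t + h)) * phi t"
    proof (cases "-h/2-1 < t \<and> t \<le> -h/2")
      case True
      have "phi (h / 2 + 1) \<le> 1 - Phi (h / 2)" using tail_lb[of "h/2"] assms by simp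
      also have "\<dots> \<le> 1 - Phi (t + h)" using True Phi_mono[of "t+h" "h/2"] by simp
      finally have 1: "phi (h / 2 + 1) \<le> 1 - Phi (t + h)" .
      have 2: "phi (h / 2 + 1) \<le> phi t" using True assms by (intro phi_mono) auto
      have "phi (h / 2 + 1) ^ 2 \<le> (1 - Phi (t + h)) * phi t"
        unfolding power2_eq_square using 1 2 phi_pos[of "h/2+1"] by (intro mult_mono) auto
      then show ?thesis using True by simp
    next
      case False
      have "0 \<le> (1 - Phi (t + h)) * phi t" using Phi_le1[of "t+h"] phi_pos[of t] by simp
      then show ?thesis using False by (auto simp: indicator_def)
    qed
  qed simp
  then show ?thesis using int_ind_const[of "-h/2-1" "-h/2" "phi (h / 2 + 1) ^ 2"] by simp
qed



lemma ln_seq: "filterlim (\<lambda>k. ln (real k)) at_top sequentially"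
  by (rule filterlim_compose[OF ln_at_top filterlim_real_sequentially])

lemma lim_zero2: assumes "0 < c" shows "(\<lambda>k. exp (- c * ln (real k))) \<longlonglongrightarrow> 0"
proof -
  have "filterlim (\<lambda>k. - c * ln (real k)) at_bot sequentially"
    using assms by (intro filterlim_tendsto_neg_mult_at_bot tendsto_const ln_seq) auto
  then show ?thesis by (rule filterlim_compose[OF exp_at_bot])
qed

lemma lim_zero1: assumes "1 < c" shows "(\<lambda>k. real k * exp (- c * ln (real k))) \<longlonglongrightarrow> 0"
proof -
  have "(\<lambda>k. exp (- (c - 1) * ln (real k))) \<longlonglongrightarrow> 0"
    using assms by (intro lim_zero2) auto
  moreover have "eventually (\<lambda>k. exp (- (c - 1) * ln (real k)) = real k * exp (- c * ln (real k))) sequentially"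
  proof (rule eventually_sequentiallyI[of 1])
    fix k :: nat assume "1 \<le> k"
    then have "real k = exp (ln (real k))" by simp
    then have "real k * exp (- c * ln (real k)) = exp (ln (real k) + - c * ln (real k))"
      by (metis exp_add)
    then show "exp (- (c - 1) * ln (real k)) = real k * exp (- c * ln (real k))"
      by (simp add: algebra_simps)
  qed
  ultimately show ?thesis by (rule Lim_transform_eventually)
qed

lemma lim_pos:
  assumes "0 < \<alpha>" "\<alpha> < 1"
  shows "filterlim (\<lambda>k. real k * exp (- (\<alpha> * sqrt (ln (real k)) + \<beta>)\<^sup>2)) at_top sequentially"
proof -
  have s: "filterlim (\<lambda>k. sqrt (ln (real k))) at_top sequentially"
    by (rule filterlim_compose[OF sqrt_at_top ln_seq])
  have g: "filterlim (\<lambda>x::real. - \<beta>\<^sup>2 + x * (- (2 * \<alpha> * \<beta>) + (1 - \<alpha>\<^sup>2) * x)) at_top at_top"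
  proof (rule filterlim_tendsto_add_at_top, rule tendsto_const, rule filterlim_at_top_mult_at_top, rule filterlim_ident)
    have "0 < 1 - \<alpha>\<^sup>2" using assms by (simp add: power_less_one_iff abs_less_iff)
    then have "filterlim (\<lambda>x::real. (1 - \<alpha>\<^sup>2) * x) at_top at_top"
      by (intro filterlim_tendsto_pos_mult_at_top filterlim_ident) auto
    then show "filterlim (\<lambda>x::real. - (2 * \<alpha> * \<beta>) + (1 - \<alpha>\<^sup>2) * x) at_top at_top"
      using filterlim_tendsto_add_at_top[of "\<lambda>x. - (2 * \<alpha> * \<beta>)" "- (2 * \<alpha> * \<beta>)" at_top "\<lambda>x. (1 - \<alpha>\<^sup>2) * x"]
      by simp
  qed
  have lim: "filterlim (\<lambda>k. exp (- \<beta>\<^sup>2 + sqrt (ln (real k)) * (- (2 * \<alpha> * \<beta>) + (1 - \<alpha>\<^sup>2) * sqrt (ln (real k))))) at_top sequentially"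
    by (rule filterlim_compose[OF exp_at_top filterlim_compose[OF g s]])
  have ev: "eventually (\<lambda>k. exp (- \<beta>\<^sup>2 + sqrt (ln (real k)) * (- (2 * \<alpha> * \<beta>) + (1 - \<alpha>\<^sup>2) * sqrt (ln (real k))))
     = real k * exp (- (\<alpha> * sqrt (ln (real k)) + \<beta>)\<^sup>2)) sequentially"
  proof (rule eventually_sequentiallyI[of 1])
    fix k :: nat assume "1 \<le> k"
    define L where "L = ln (real k)"
    have L0: "0 \<le> L" using \<open>1 \<le> k\<close> by (simp add: L_def)
    have "real k = exp L" using \<open>1 \<le> k\<close> by (simp add: L_def)
    then have "real k * exp (- (\<alpha> * sqrt L + \<beta>)\<^sup>2) = exp (L + - (\<alpha> * sqrt L + \<beta>)\<^sup>2)"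
      by (metis exp_add)
    also have "L + - (\<alpha> * sqrt L + \<beta>)\<^sup>2 = - \<beta>\<^sup>2 + sqrt L * (- (2 * \<alpha> * \<beta>) + (1 - \<alpha>\<^sup>2) * sqrt L)"
    proof -
      have "sqrt L * sqrt L = L" using L0 by simp
      then show ?thesis by (simp add: power2_eq_square algebra_simps)
    qed
    finally show "exp (- \<beta>\<^sup>2 + sqrt (ln (real k)) * (- (2 * \<alpha> * \<beta>) + (1 - \<alpha>\<^sup>2) * sqrt (ln (real k))))
     = real k * exp (- (\<alpha> * sqrt (ln (real k)) + \<beta>)\<^sup>2)" by (simp add: L_def)
  qed
  show ?thesis using filterlim_cong[OF refl refl ev] lim by simp
qed

lemma bern: assumes "0 \<le> x" "x \<le> 1" shows "1 - real k * (1 - x) \<le> x ^ k"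
proof -
  have "1 - real k * (1 - x) = 1 + real k * (x - 1)" by (simp add: algebra_simps)
  then show ?thesis using Bernoulli_inequality[of "x - 1" k] assms by simp
qed

lemma expb: assumes "0 \<le> q" "q \<le> 1" shows "(1 - q) ^ k \<le> exp (- (real k * q))"
proof -
  have "(1 - q) ^ k \<le> exp (- q) ^ k"
    using assms by (intro power_mono) (auto simp: exp_ge_add_one_self[of "-q", simplified])
  also have "\<dots> = exp (- (real k * q))" by (simp add: exp_of_nat_mult[symmetric])
  finally show ?thesis .
qed



lemma root_in:
  fixes f :: "real \<Rightarrow> real"
  assumes cont: "continuous_on UNIV f" and mono: "\<And>x y. x < y \<Longrightarrow> f x < f y"
    and "lo \<le> hi" "f lo < p" "p < f hi"
  shows "lo \<le> (THE h. f h = p) \<and> (THE h. f h = p) \<le> hi"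
proof -
  obtain x where x: "lo \<le> x" "x \<le> hi" "f x = p"
    using IVT'[of f lo p hi] assms continuous_on_subset[OF cont] by force
  have "(THE h. f h = p) = x"
  proof (rule the_equality)
    show "f x = p" by fact
    fix y assume "f y = p"
    then show "y = x" using mono[of x y] mono[of y x] x(3) by (cases x y rule: linorder_cases) auto
  qed
  then show ?thesis using x by simp
qed

lemma F_nonneg: "0 \<le> F k h"
  unfolding F_def by (intro integral_nonneg_AE AE_I2 mult_nonneg_nonneg zero_le_power Phi_nonneg less_imp_le[OF phi_pos])

lemma F_le1: "F k h \<le> 1"
proof -
  have "F k h \<le> (LINT t|lborel. phi t)"
    unfolding F_def
  proof (rule integral_mono[OF F_int phi_int])
    fix t show "Phi (t + h) ^ k * phi t \<le> phi t"
      using phi_pos[of t] by (simp add: mult_left_le_one_le Phi_nonneg Phi_le1 power_le_one)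
  qed
  then show ?thesis by (simp add: phi_integral)
qed

lemma h1_eq: "h1 p k = (THE h. F k h = p)"
  unfolding h1_def F_def ..

lemma h2_eq: "h2 p k = (THE h. F 1 h ^ k = p)"
  unfolding h2_def F_def by simp

lemma h1_bounds:
  assumes e: "0 < \<epsilon>" "\<epsilon> < 1" and p: "0 < p" "p < 1"
  shows "eventually (\<lambda>k. (1 - \<epsilon>) * sqrt (2 * ln (real k)) \<le> h1 p k \<and>
                           h1 p k \<le> (1 + \<epsilon>) * sqrt (2 * ln (real k))) sequentially"
proof -
  define c1 where "c1 = (1 + \<epsilon> / 2)\<^sup>2"
  define c2 where "c2 = (\<epsilon> / 2)\<^sup>2"
  define \<alpha> where "\<alpha> = 1 - \<epsilon> / 2"
  define \<beta> where "\<beta> = 1 / sqrt (2::real)"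
  have c1: "1 < c1" unfolding c1_def using e by (simp add: one_less_power)
  have c2: "0 < c2" unfolding c2_def using e by simp
  have "(\<lambda>k. (1 - real k * exp (- c1 * ln (real k))) * (1 - exp (- c2 * ln (real k)))) \<longlonglongrightarrow> (1 - 0) * (1 - 0)"
    by (intro tendsto_intros lim_zero1 lim_zero2 c1 c2)
  then have ev1: "eventually (\<lambda>k. p < (1 - real k * exp (- c1 * ln (real k))) * (1 - exp (- c2 * ln (real k)))) sequentially"
    using p by (intro order_tendstoD(1)) auto
  define X where "X = (\<lambda>k. 1 / sqrt (2 * pi) * (real k * exp (- (\<alpha> * sqrt (ln (real k)) + \<beta>)\<^sup>2)))"
  have "filterlim X at_top sequentially"
    unfolding X_def using e
    by (intro filterlim_tendsto_pos_mult_at_top[where c = "1 / sqrt (2 * pi)"] lim_pos) (auto simp: \<alpha>_def)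
  then have "filterlim (\<lambda>k. - X k) at_bot sequentially"
    by (simp add: filterlim_uminus_at_top)
  then have "(\<lambda>k. exp (- X k)) \<longlonglongrightarrow> 0"
    by (rule filterlim_compose[OF exp_at_bot])
  then have "(\<lambda>k. exp (- X k) + exp (- c2 * ln (real k))) \<longlonglongrightarrow> 0 + 0"
    by (intro tendsto_intros lim_zero2 c2)
  then have ev2: "eventually (\<lambda>k. exp (- X k) + exp (- c2 * ln (real k)) < p) sequentially"
    using p by (intro order_tendstoD(2)) auto
  have ev3: "eventually (\<lambda>k. 2 \<le> k) sequentially" by (rule eventually_ge_at_top)
  show ?thesis
  proof (rule eventually_mono[OF eventually_conj[OF ev1 eventually_conj[OF ev2 ev3]]])
    fix k :: nat
    assume H: "p < (1 - real k * exp (- c1 * ln (real k))) * (1 - exp (- c2 * ln (real k))) \<and>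
               exp (- X k) + exp (- c2 * ln (real k)) < p \<and> 2 \<le> k"
    define L where "L = ln (real k)"
    define a where "a = sqrt (2 * L)"
    have L: "0 < L" unfolding L_def using H by simp
    have a: "0 < a" unfolding a_def using L by simp
    have a2: "a\<^sup>2 = 2 * L" unfolding a_def using L by simp
    define s where "s = \<epsilon> / 2 * a"
    have s0: "0 \<le> s" unfolding s_def using a e by simp
    have "s\<^sup>2 = (\<epsilon> / 2)\<^sup>2 * a\<^sup>2" unfolding s_def by (rule power_mult_distrib)
    then have s2: "exp (- s\<^sup>2 / 2) = exp (- c2 * L)"
      unfolding c2_def a2 by simp
    define hU where "hU = (1 + \<epsilon>) * a"
    define b where "b = (1 + \<epsilon> / 2) * a"
    have b0: "0 \<le> b" unfolding b_def using a e by simp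
    have b2: "exp (- b\<^sup>2 / 2) = exp (- c1 * L)"
      unfolding b_def c1_def by (simp add: power_mult_distrib a2)
    have "1 - real k * exp (- c1 * L) \<le> 1 - real k * (1 - Phi b)"
      using tail_up[OF b0] b2 by (simp add: mult_left_mono)
    also have "\<dots> \<le> Phi b ^ k" by (rule bern[OF Phi_nonneg Phi_le1])
    finally have A: "1 - real k * exp (- c1 * L) \<le> Phi b ^ k" .
    have B: "1 - exp (- c2 * L) \<le> 1 - Phi (- s)" using tail_low[OF s0] s2 by simp
    have B0: "0 \<le> 1 - exp (- c2 * L)" using c2 L by simp
    have "(1 - real k * exp (- c1 * L)) * (1 - exp (- c2 * L)) \<le> Phi b ^ k * (1 - Phi (- s))"
      using A B B0 by (intro mult_mono) (auto simp: Phi_nonneg Phi_le1)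
    also have "\<dots> \<le> F k hU"
      using F_lower[of "hU" s k] unfolding hU_def b_def s_def by (simp add: algebra_simps)
    finally have U: "p < F k hU" using H unfolding L_def by linarith
    define hD where "hD = (1 - \<epsilon>) * a"
    define c where "c = \<alpha> * a"
    have c0: "0 \<le> c" unfolding c_def \<alpha>_def using a e by simp
    have "F k hD \<le> Phi (hD + s) ^ k + (1 - Phi s)" by (rule F_upper)
    also have "hD + s = c" unfolding hD_def s_def c_def \<alpha>_def by (simp add: algebra_simps)
    finally have D1: "F k hD \<le> Phi c ^ k + (1 - Phi s)" .
    have D2: "1 - Phi s \<le> exp (- c2 * L)" using tail_up[OF s0] s2 by simp
    have q: "phi (c + 1) \<le> 1 - Phi c" by (rule tail_lb[OF c0])
    have "Phi c ^ k = (1 - (1 - Phi c)) ^ k" by simp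
    also have "\<dots> \<le> exp (- (real k * (1 - Phi c)))"
      by (rule expb) (auto simp: Phi_nonneg Phi_le1)
    also have "\<dots> \<le> exp (- (real k * phi (c + 1)))"
      using q by (simp add: mult_left_mono)
    also have "real k * phi (c + 1) = X k"
    proof -
      have "c + 1 = sqrt 2 * (\<alpha> * sqrt L + \<beta>)"
        unfolding c_def a_def \<beta>_def by (simp add: real_sqrt_mult algebra_simps)
      then have "(c + 1)\<^sup>2 / 2 = (\<alpha> * sqrt L + \<beta>)\<^sup>2"
        by (simp add: power_mult_distrib)
      then show ?thesis unfolding X_def phi_eq L_def by simp
    qed
    finally have D3: "Phi c ^ k \<le> exp (- X k)" .
    have D: "F k hD < p" using D1 D2 D3 H unfolding L_def by linarith
    have "hD \<le> h1 p k \<and> h1 p k \<le> hU"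
      unfolding h1_eq
    proof (rule root_in[OF F_cont])
      show "\<And>x y. x < y \<Longrightarrow> F k x < F k y" using H by (intro F_strict) auto
      show "hD \<le> hU" unfolding hD_def hU_def using a e by simp
    qed fact+
    then show "(1 - \<epsilon>) * sqrt (2 * ln (real k)) \<le> h1 p k \<and> h1 p k \<le> (1 + \<epsilon>) * sqrt (2 * ln (real k))"
      unfolding hD_def hU_def a_def L_def by simp
  qed
qed



lemma h2_bounds:
  assumes e: "0 < \<epsilon>" "\<epsilon> < 1" and p: "0 < p" "p < 1"
  shows "eventually (\<lambda>k. (1 - \<epsilon>) * (2 * sqrt (ln (real k))) \<le> h2 p k \<and>
                           h2 p k \<le> (1 + \<epsilon>) * (2 * sqrt (ln (real k)))) sequentially"
proof -
  define c1 where "c1 = (1 + \<epsilon>)\<^sup>2"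
  have c1: "1 < c1" unfolding c1_def using e by (simp add: one_less_power)
  have "(\<lambda>k. 1 - 2 * (real k * exp (- c1 * ln (real k)))) \<longlonglongrightarrow> 1 - 2 * 0"
    by (intro tendsto_intros lim_zero1 c1)
  then have ev1: "eventually (\<lambda>k. p < 1 - 2 * (real k * exp (- c1 * ln (real k)))) sequentially"
    using p by (intro order_tendstoD(1)) auto
  define Y where "Y = (\<lambda>k. 1 / (2 * pi) * (real k * exp (- ((1 - \<epsilon>) * sqrt (ln (real k)) + 1)\<^sup>2)))"
  have "filterlim Y at_top sequentially"
    unfolding Y_def using e
    by (intro filterlim_tendsto_pos_mult_at_top[where c = "1 / (2 * pi)"] lim_pos) auto
  then have "filterlim (\<lambda>k. - Y k) at_bot sequentially"
    by (simp add: filterlim_uminus_at_top)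
  then have "(\<lambda>k. exp (- Y k)) \<longlonglongrightarrow> 0"
    by (rule filterlim_compose[OF exp_at_bot])
  then have ev2: "eventually (\<lambda>k. exp (- Y k) < p) sequentially"
    using p by (intro order_tendstoD(2)) auto
  have ev3: "eventually (\<lambda>k. 2 \<le> k) sequentially" by (rule eventually_ge_at_top)
  show ?thesis
  proof (rule eventually_mono[OF eventually_conj[OF ev1 eventually_conj[OF ev2 ev3]]])
    fix k :: nat
    assume H: "p < 1 - 2 * (real k * exp (- c1 * ln (real k))) \<and> exp (- Y k) < p \<and> 2 \<le> k"
    define L where "L = ln (real k)"
    define b where "b = 2 * sqrt L"
    have L: "0 < L" unfolding L_def using H by simp
    have b: "0 < b" unfolding b_def using L by simp
    have b2: "b\<^sup>2 = 4 * L" unfolding b_def using L by (simp add: power_mult_distrib)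
    define hU where "hU = (1 + \<epsilon>) * b"
    have hU0: "0 \<le> hU" unfolding hU_def using b e by simp
    have "hU\<^sup>2 = (1 + \<epsilon>)\<^sup>2 * b\<^sup>2" unfolding hU_def by (rule power_mult_distrib)
    then have hU2: "exp (- hU\<^sup>2 / 4) = exp (- c1 * L)" unfolding c1_def b2 by simp
    have "1 - 2 * (real k * exp (- c1 * L)) \<le> 1 - real k * (1 - F 1 hU)"
    proof -
      have "real k * (1 - F 1 hU) \<le> real k * (2 * exp (- c1 * L))"
        using G_up[OF hU0] hU2 by (intro mult_left_mono) auto
      then show ?thesis by (simp add: algebra_simps)
    qed
    also have "\<dots> \<le> F 1 hU ^ k" by (rule bern[OF F_nonneg F_le1])
    finally have U: "p < F 1 hU ^ k" using H unfolding L_def by linarith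
    define hD where "hD = (1 - \<epsilon>) * b"
    have hD0: "0 \<le> hD" unfolding hD_def using b e by simp
    have q: "phi (hD / 2 + 1) ^ 2 \<le> 1 - F 1 hD" by (rule G_low[OF hD0])
    have "F 1 hD ^ k = (1 - (1 - F 1 hD)) ^ k" by simp
    also have "\<dots> \<le> exp (- (real k * (1 - F 1 hD)))"
      by (rule expb) (auto simp: F_nonneg F_le1)
    also have "\<dots> \<le> exp (- (real k * phi (hD / 2 + 1) ^ 2))"
      using q by (simp add: mult_left_mono)
    also have "real k * phi (hD / 2 + 1) ^ 2 = Y k"
    proof -
      have hh: "hD / 2 + 1 = (1 - \<epsilon>) * sqrt L + 1" unfolding hD_def b_def by simp
      have "phi x ^ 2 = exp (- x\<^sup>2) / (2 * pi)" for x
      proof -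
        have "exp (- x\<^sup>2 / 2) ^ 2 = exp (- x\<^sup>2)"
          by (simp add: exp_of_nat_mult[symmetric] power2_eq_square[of "exp _"] exp_add[symmetric])
        then show ?thesis unfolding phi_eq by (simp add: power_divide)
      qed
      then show ?thesis unfolding Y_def hh L_def by simp
    qed
    finally have D: "F 1 hD ^ k < p" using H by linarith
    have "hD \<le> h2 p k \<and> h2 p k \<le> hU"
      unfolding h2_eq
    proof (rule root_in)
      show "continuous_on UNIV (\<lambda>h. F 1 h ^ k)" by (intro continuous_on_power F_cont)
      show "\<And>x y. x < y \<Longrightarrow> F 1 x ^ k < F 1 y ^ k"
        using H by (intro power_strict_mono F_strict F_nonneg) auto
      show "hD \<le> hU" unfolding hD_def hU_def using b e by simp
    qed fact+
    then show "(1 - \<epsilon>) * (2 * sqrt (ln (real k))) \<le> h2 p k \<and> h2 p k \<le> (1 + \<epsilon>) * (2 * sqrt (ln (real k)))"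
      unfolding hD_def hU_def b_def L_def by simp
  qed
qed

lemma ratio_lim:
  fixes f g :: "nat \<Rightarrow> real"
  assumes "\<And>\<epsilon>. 0 < \<epsilon> \<Longrightarrow> \<epsilon> < 1 \<Longrightarrow>
     eventually (\<lambda>k. (1 - \<epsilon>) * g k \<le> f k \<and> f k \<le> (1 + \<epsilon>) * g k) sequentially"
    and "eventually (\<lambda>k. 0 < g k) sequentially"
  shows "(\<lambda>k. f k / g k) \<longlonglongrightarrow> 1"
proof (rule tendstoI)
  fix e :: real assume "0 < e"
  define \<epsilon> where "\<epsilon> = min (e / 2) (1 / 2)"
  have "0 < \<epsilon>" "\<epsilon> < 1" "\<epsilon> < e" using \<open>0 < e\<close> by (auto simp: \<epsilon>_def)
  show "eventually (\<lambda>k. dist (f k / g k) 1 < e) sequentially"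
  proof (rule eventually_mono[OF eventually_conj[OF assms(1)[OF \<open>0 < \<epsilon>\<close> \<open>\<epsilon> < 1\<close>] assms(2)]])
    fix k assume H: "((1 - \<epsilon>) * g k \<le> f k \<and> f k \<le> (1 + \<epsilon>) * g k) \<and> 0 < g k"
    then have "1 - \<epsilon> \<le> f k / g k" "f k / g k \<le> 1 + \<epsilon>"
      by (auto simp: field_simps)
    then show "dist (f k / g k) 1 < e" using \<open>\<epsilon> < e\<close> by (simp add: dist_real_def abs_le_iff)
  qed
qed

lemma pos_ev: "eventually (\<lambda>k. 0 < c * sqrt (ln (real k))) sequentially" if "0 < c"
proof (rule eventually_mono[OF eventually_ge_at_top[of 2]])
  fix k :: nat assume "2 \<le> k" then show "0 < c * sqrt (ln (real k))" using that by simp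
qed

theorem theorem6:
  fixes p :: real
  assumes "0 < p" and "p < 1"
  shows "(\<lambda>k. h2 p k) \<sim>[sequentially] (\<lambda>k. sqrt 2 * h1 p k) \<and>
         (\<lambda>k. sqrt 2 * h1 p k) \<sim>[sequentially] (\<lambda>k. 2 * sqrt (ln (real k)))"
proof -
  have sq: "sqrt (2 * x) = sqrt 2 * sqrt x" for x :: real by (simp add: real_sqrt_mult)
  have R1: "(\<lambda>k. h1 p k / (sqrt 2 * sqrt (ln (real k)))) \<longlonglongrightarrow> 1"
    using h1_bounds[OF _ _ assms] pos_ev[of "sqrt 2"] unfolding sq
    by (intro ratio_lim) auto
  have R2: "(\<lambda>k. h2 p k / (2 * sqrt (ln (real k)))) \<longlonglongrightarrow> 1"
    using h2_bounds[OF _ _ assms] pos_ev[of 2]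
    by (intro ratio_lim) auto
  have eq: "sqrt 2 * h1 p k / (2 * sqrt (ln (real k))) = h1 p k / (sqrt 2 * sqrt (ln (real k)))" for k
  proof -
    have "(2::real) = sqrt 2 * sqrt 2" by simp
    then show ?thesis by (metis (no_types, opaque_lifting) mult.assoc mult_divide_mult_cancel_left_if real_sqrt_eq_zero_cancel_iff zero_neq_numeral)
  qed
  have E2: "(\<lambda>k. sqrt 2 * h1 p k) \<sim>[sequentially] (\<lambda>k. 2 * sqrt (ln (real k)))"
    by (rule asymp_equivI') (use R1 in \<open>simp add: eq\<close>)
  have E1: "(\<lambda>k. h2 p k) \<sim>[sequentially] (\<lambda>k. 2 * sqrt (ln (real k)))"
    by (rule asymp_equivI') (use R2 in simp)
  have "(\<lambda>k. h2 p k) \<sim>[sequentially] (\<lambda>k. sqrt 2 * h1 p k)"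
    using asymp_equiv_trans[OF E1 asymp_equiv_symI[OF E2]] .
  then show ?thesis using E2 by simp
qed


end
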